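(* For all $(k,l,m)\in\mathbb{Z}^3$, $$R(k,l,m;a,b,c;x)=\frac{c(c+1)}{(a+1)(b+1)x(1-x)}\,Q(k-1,l-1,m-1;a+1,b+1,c+1;x).$$
   Context: $F(a,b,c;x)=\sum_{n\ge0}\frac{(a)_n(b)_n}{(c)_n n!}x^n$, $(\alpha)_n=\Gamma(\alpha+n)/\Gamma(\alpha)$. Standing assumption: $a,b,c-a,c-b,c,c-a-b,a-b\notin\mathbb{Z}$. For each $(k,l,m)\in\mathbb{Z}^3$, $Q(k,l,m;a,b,c;x)$ and $R(k,l,m;a,b,c;x)$ denote the unique rational functions of $a,b,c,x$ such that $F(a+k,b+l,c+m;x)=Q\cdot F(a+1,b+1,c+1;x)+R\cdot F(a,b,c;x)$; $Q(k,l,m;\alpha_1,\alpha_2,\alpha_3;\beta)$ denotes substitution of $a,b,c,x$ by $\alpha_1,\alpha_2,\alpha_3,\beta$. *)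

theory Defs
  imports "HOL-Analysis.Analysis" "HOL-Computational_Algebra.Computational_Algebra" "HOL-Computational_Algebra.Field_as_Ring"
begin

definition hyp2f1 :: "complex \<Rightarrow> complex \<Rightarrow> complex \<Rightarrow> complex \<Rightarrow> complex" where
  "hyp2f1 a b c x =
     (\<Sum>n. pochhammer a n * pochhammer b n / (pochhammer c n * fact n) * x ^ n)"

type_synonym ratfun = "complex poly fract"

definition rf_num :: "ratfun \<Rightarrow> complex poly" where
  "rf_num r = fst (quot_of_fract r)"

definition rf_den :: "ratfun \<Rightarrow> complex poly" where
  "rf_den r = snd (quot_of_fract r)"

definition rf_eval :: "ratfun \<Rightarrow> complex \<Rightarrow> complex" where
  "rf_eval r x = poly (rf_num r) x / poly (rf_den r) x"

definition standing :: "complex \<Rightarrow> complex \<Rightarrow> complex \<Rightarrow> bool" where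
  "standing a b c \<longleftrightarrow> a \<notin> \<int> \<and> b \<notin> \<int> \<and> c - a \<notin> \<int> \<and> c - b \<notin> \<int> \<and> c \<notin> \<int>
      \<and> c - a - b \<notin> \<int> \<and> a - b \<notin> \<int>"

definition is_contig_decomp ::
  "int \<Rightarrow> int \<Rightarrow> int \<Rightarrow> complex \<Rightarrow> complex \<Rightarrow> complex \<Rightarrow> ratfun \<times> ratfun \<Rightarrow> bool" where
  "is_contig_decomp k l m a b c QR \<longleftrightarrow>
     (\<forall>x. norm x < 1 \<longrightarrow> poly (rf_den (fst QR)) x \<noteq> 0 \<longrightarrow> poly (rf_den (snd QR)) x \<noteq> 0 \<longrightarrow>
        hyp2f1 (a + of_int k) (b + of_int l) (c + of_int m) x =
          rf_eval (fst QR) x * hyp2f1 (a + 1) (b + 1) (c + 1) x + rf_eval (snd QR) x * hyp2f1 a b c x)"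

definition contigQ :: "int \<Rightarrow> int \<Rightarrow> int \<Rightarrow> complex \<Rightarrow> complex \<Rightarrow> complex \<Rightarrow> ratfun" where
  "contigQ k l m a b c = fst (THE QR. is_contig_decomp k l m a b c QR)"

definition contigR :: "int \<Rightarrow> int \<Rightarrow> int \<Rightarrow> complex \<Rightarrow> complex \<Rightarrow> complex \<Rightarrow> ratfun" where
  "contigR k l m a b c = snd (THE QR. is_contig_decomp k l m a b c QR)"

end

theory Submission
  imports Defs
begin


abbreviation fp :: "complex poly \<Rightarrow> complex fps" where "fp \<equiv> fps_of_poly"

definition Hf :: "complex \<Rightarrow> complex \<Rightarrow> complex \<Rightarrow> complex fps" where
  "Hf a b c = Abs_fps (\<lambda>n. pochhammer a n * pochhammer b n / (pochhammer c n * fact n))"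

lemma Hf_nth: "fps_nth (Hf a b c) n = pochhammer a n * pochhammer b n / (pochhammer c n * fact n)"
  by (simp add: Hf_def)

lemma hyp2f1_eval: "hyp2f1 a b c x = eval_fps (Hf a b c) x"
  by (simp add: hyp2f1_def eval_fps_def Hf_def)

lemma Hf_sym: "Hf a b c = Hf b a c"
  by (simp add: Hf_def mult.commute)

lemma poch_nz: "(c::complex) \<notin> \<int> \<Longrightarrow> pochhammer c n \<noteq> 0"
  by (auto simp: pochhammer_eq_0_iff)

lemma nint_plus1: "(c::complex) \<notin> \<int> \<Longrightarrow> c + 1 \<notin> \<int>"
  by (metis Ints_1 Ints_diff add_diff_cancel_right')

lemma nint_minus1: "(c::complex) \<notin> \<int> \<Longrightarrow> c - 1 \<notin> \<int>"
  by (metis Ints_1 Ints_add diff_add_cancel)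

lemma nint_nz: "(c::complex) \<notin> \<int> \<Longrightarrow> c \<noteq> 0"
  by auto

lemma Hf_deriv:
  assumes "c \<notin> \<int>"
  shows "fps_deriv (Hf a b c) = fps_const (a*b/c) * Hf (a+1) (b+1) (c+1)"
proof (rule fps_ext)
  fix n
  have p: "pochhammer (c+1) n \<noteq> 0" using poch_nz[OF nint_plus1[OF assms]] .
  have c: "c \<noteq> 0" using assms by auto
  show "fps_nth (fps_deriv (Hf a b c)) n = fps_nth (fps_const (a*b/c) * Hf (a+1) (b+1) (c+1)) n"
    using p c by (simp add: Hf_nth pochhammer_rec fact_Suc field_simps del: of_nat_Suc)
qed

lemma theta_nth: "fps_nth (fps_X * fps_deriv G) n = of_nat n * fps_nth G n"
  by (cases n) (simp_all add: fps_X_mult_nth del: of_nat_Suc)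

lemma Hf_Suc': "fps_nth (Hf a b c) (Suc n) = fps_nth (Hf a b c) n * ((a + of_nat n) * (b + of_nat n)) / ((c + of_nat n) * (of_nat n + 1))"
  if "c \<notin> \<int>"
proof -
  have p: "pochhammer c n \<noteq> 0" "c + of_nat n \<noteq> 0" using poch_nz[OF that, of "Suc n"] by (auto simp: pochhammer_Suc)
  have f: "fact n \<noteq> (0::complex)" "of_nat n + (1::complex) \<noteq> 0" by simp_all (metis of_nat_Suc of_nat_eq_0_iff add.commute nat.distinct(1))
  have "fps_nth (Hf a b c) (Suc n) = (pochhammer a n * (a + of_nat n)) * (pochhammer b n * (b + of_nat n)) / ((pochhammer c n * (c + of_nat n)) * ((of_nat n + 1) * fact n))"
    by (simp add: Hf_nth pochhammer_Suc fact_Suc add.commute)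
  also have "\<dots> = (pochhammer a n * pochhammer b n / (pochhammer c n * fact n)) * ((a + of_nat n) * (b + of_nat n)) / ((c + of_nat n) * (of_nat n + 1))"
    by (simp add: field_simps)
  finally show ?thesis by (simp add: Hf_nth)
qed

lemma Hf_Suc: "fps_nth (Hf a b c) (Suc n) * ((of_nat n + 1) * (c + of_nat n)) = fps_nth (Hf a b c) n * ((a + of_nat n) * (b + of_nat n))"
  if "c \<notin> \<int>"
proof -
  have p: "c + of_nat n \<noteq> 0" using poch_nz[OF that, of "Suc n"] by (auto simp: pochhammer_Suc)
  have f: "of_nat n + (1::complex) \<noteq> 0" by (metis of_nat_Suc of_nat_eq_0_iff add.commute nat.distinct(1))
  show ?thesis using p f by (simp add: Hf_Suc'[OF that])
qed

lemma Hf_raise_a: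
  "fps_const a * Hf (a+1) b c = fps_const a * Hf a b c + fps_X * fps_deriv (Hf a b c)"
proof (rule fps_ext)
  fix n
  have e: "a * pochhammer (a+1) n = (a + of_nat n) * pochhammer a n"
    using pochhammer_rec[of a n] pochhammer_rec'[of a n] by simp
  have "fps_nth (fps_const a * Hf (a+1) b c) n = (a * pochhammer (a+1) n) * pochhammer b n / (pochhammer c n * fact n)"
    by (simp add: Hf_nth)
  also have "\<dots> = (a + of_nat n) * pochhammer a n * pochhammer b n / (pochhammer c n * fact n)"
    by (simp only: e)
  also have "\<dots> = fps_nth (fps_const a * Hf a b c + fps_X * fps_deriv (Hf a b c)) n"
    unfolding fps_add_nth theta_nth by (simp add: Hf_nth algebra_simps add_divide_distrib)
  finally show "fps_nth (fps_const a * Hf (a+1) b c) n = fps_nth (fps_const a * Hf a b c + fps_X * fps_deriv (Hf a b c)) n" .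
qed

lemma Hf_lower_c:
  assumes "c \<notin> \<int>"
  shows "fps_const (c-1) * Hf a b (c-1) = fps_const (c-1) * Hf a b c + fps_X * fps_deriv (Hf a b c)"
proof (rule fps_ext)
  fix n
  have p1: "pochhammer c n \<noteq> 0" using poch_nz[OF assms] .
  have p2: "pochhammer (c-1) n \<noteq> 0" using poch_nz[OF nint_minus1[OF assms]] .
  have "(c-1) * pochhammer c n = (c - 1 + of_nat n) * pochhammer (c-1) n"
    using pochhammer_rec[of "c-1" n] pochhammer_rec'[of "c-1" n] by simp
  then have e: "(c-1) / pochhammer (c-1) n = (c - 1 + of_nat n) / pochhammer c n"
    using p1 p2 by (simp add: field_simps)
  have "fps_nth (fps_const (c-1) * Hf a b (c-1)) n = (c-1) / pochhammer (c-1) n * (pochhammer a n * pochhammer b n / fact n)"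
    by (simp add: Hf_nth)
  also have "\<dots> = (c - 1 + of_nat n) / pochhammer c n * (pochhammer a n * pochhammer b n / fact n)"
    by (simp only: e)
  also have "\<dots> = fps_nth (fps_const (c-1) * Hf a b c + fps_X * fps_deriv (Hf a b c)) n"
    unfolding fps_add_nth theta_nth by (simp add: Hf_nth algebra_simps add_divide_distrib diff_divide_distrib)
  finally show "fps_nth (fps_const (c-1) * Hf a b (c-1)) n = fps_nth (fps_const (c-1) * Hf a b c + fps_X * fps_deriv (Hf a b c)) n" .
qed

lemma Hf_lower_nth: "fps_nth (Hf (a-1) b c) (Suc n) = fps_nth (Hf a b c) n * ((a - 1) * (b + of_nat n)) / ((c + of_nat n) * (of_nat n + 1))"
  if "c \<notin> \<int>"
proof -
  have p: "pochhammer c n \<noteq> 0" "c + of_nat n \<noteq> 0" using poch_nz[OF that, of "Suc n"] by (auto simp: pochhammer_Suc)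
  have f: "fact n \<noteq> (0::complex)" "of_nat n + (1::complex) \<noteq> 0" by simp_all (metis of_nat_Suc of_nat_eq_0_iff add.commute nat.distinct(1))
  have e1: "pochhammer (a-1) (Suc n) = (a-1) * pochhammer a n" using pochhammer_rec[of "a-1" n] by simp
  have "fps_nth (Hf (a-1) b c) (Suc n) = ((a-1) * pochhammer a n) * (pochhammer b n * (b + of_nat n)) / ((pochhammer c n * (c + of_nat n)) * ((of_nat n + 1) * fact n))"
    unfolding Hf_nth e1 by (simp add: pochhammer_Suc fact_Suc add.commute)
  also have "\<dots> = (pochhammer a n * pochhammer b n / (pochhammer c n * fact n)) * ((a - 1) * (b + of_nat n)) / ((c + of_nat n) * (of_nat n + 1))"
    by (simp add: field_simps)
  finally show ?thesis by (simp add: Hf_nth)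
qed

lemma Hf_lower_a:
  assumes "c \<notin> \<int>"
  shows "fps_const (c-a) * Hf (a-1) b c = fps_X * fps_deriv (Hf a b c) - fps_X * (fps_X * fps_deriv (Hf a b c))
           + fps_const (c-a) * Hf a b c - fps_const b * (fps_X * Hf a b c)"
proof (rule fps_ext)
  fix n
  show "fps_nth (fps_const (c-a) * Hf (a-1) b c) n = fps_nth (fps_X * fps_deriv (Hf a b c) - fps_X * (fps_X * fps_deriv (Hf a b c))
           + fps_const (c-a) * Hf a b c - fps_const b * (fps_X * Hf a b c)) n"
  proof (cases n)
    case 0
    then show ?thesis by (simp add: Hf_nth)
  next
    case (Suc m)
    have p: "c + of_nat m \<noteq> 0" using poch_nz[OF assms, of "Suc m"] by (auto simp: pochhammer_Suc)
    have f: "of_nat m + (1::complex) \<noteq> 0" by (metis of_nat_Suc of_nat_eq_0_iff add.commute nat.distinct(1))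
    have "fps_nth (fps_X * fps_deriv (Hf a b c) - fps_X * (fps_X * fps_deriv (Hf a b c))
           + fps_const (c-a) * Hf a b c - fps_const b * (fps_X * Hf a b c)) (Suc m)
       = (of_nat m + 1) * fps_nth (Hf a b c) (Suc m) - of_nat m * fps_nth (Hf a b c) m
         + (c-a) * fps_nth (Hf a b c) (Suc m) - b * fps_nth (Hf a b c) m"
      by (simp only: fps_add_nth fps_sub_nth theta_nth fps_X_mult_nth fps_mult_left_const_nth) (simp add: algebra_simps)
    also have "\<dots> = (of_nat m + 1 + c - a) * fps_nth (Hf a b c) (Suc m) - (of_nat m + b) * fps_nth (Hf a b c) m"
      by (simp add: algebra_simps)
    also have "\<dots> = fps_nth (Hf a b c) m * ((of_nat m + 1 + c - a) * ((a + of_nat m) * (b + of_nat m)) / ((c + of_nat m) * (of_nat m + 1)) - (of_nat m + b))"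
      unfolding Hf_Suc'[OF assms] by (simp add: right_diff_distrib)
    also have "\<dots> = fps_nth (Hf a b c) m * ((c - a) * ((a - 1) * (b + of_nat m)) / ((c + of_nat m) * (of_nat m + 1)))"
    proof -
      define d where "d = (c + of_nat m) * (of_nat m + 1)"
      have d: "d \<noteq> 0" using p f by (simp add: d_def)
      have key: "(of_nat m + 1 + c - a) * ((a + of_nat m) * (b + of_nat m)) - (of_nat m + b) * d = (c - a) * ((a - 1) * (b + of_nat m))"
        unfolding d_def by (simp add: algebra_simps)
      have "(of_nat m + 1 + c - a) * ((a + of_nat m) * (b + of_nat m)) / d - (of_nat m + b)
            = ((of_nat m + 1 + c - a) * ((a + of_nat m) * (b + of_nat m)) - (of_nat m + b) * d) / d"
        using d by (simp add: field_simps)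
      then show ?thesis unfolding key d_def[symmetric] by simp
    qed
    also have "\<dots> = fps_nth (fps_const (c-a) * Hf (a-1) b c) (Suc m)"
      by (simp add: Hf_lower_nth[OF assms])
    finally show ?thesis using Suc by simp
  qed
qed

definition theta :: "complex fps \<Rightarrow> complex fps" where "theta G = fps_X * fps_deriv G"

lemma theta_nth': "fps_nth (theta G) n = of_nat n * fps_nth G n"
  by (simp add: theta_def theta_nth)

lemma Hf_ode:
  assumes "c \<notin> \<int>"
  shows "fps_X * fps_deriv (fps_deriv (Hf a b c)) + fps_const c * fps_deriv (Hf a b c) =
     theta (theta (Hf a b c)) + fps_const (a+b) * theta (Hf a b c) + fps_const (a*b) * Hf a b c"
proof (rule fps_ext)
  fix n
  have p: "c + of_nat n \<noteq> 0" using poch_nz[OF assms, of "Suc n"] by (auto simp: pochhammer_Suc)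
  have f: "of_nat n + (1::complex) \<noteq> 0" by (metis of_nat_Suc of_nat_eq_0_iff add.commute nat.distinct(1))
  have "fps_nth (fps_X * fps_deriv (fps_deriv (Hf a b c)) + fps_const c * fps_deriv (Hf a b c)) n
      = (of_nat n + 1) * (c + of_nat n) * fps_nth (Hf a b c) (Suc n)"
    by (simp add: theta_nth fps_deriv_nth algebra_simps)
  also have "\<dots> = fps_nth (Hf a b c) n * ((a + of_nat n) * (b + of_nat n))"
    using p f by (simp add: Hf_Suc'[OF assms])
  also have "\<dots> = fps_nth (theta (theta (Hf a b c)) + fps_const (a+b) * theta (Hf a b c) + fps_const (a*b) * Hf a b c) n"
    by (simp add: theta_nth' algebra_simps)
  finally show "fps_nth (fps_X * fps_deriv (fps_deriv (Hf a b c)) + fps_const c * fps_deriv (Hf a b c)) n =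
     fps_nth (theta (theta (Hf a b c)) + fps_const (a+b) * theta (Hf a b c) + fps_const (a*b) * Hf a b c) n" .
qed


lemma deriv_aux: fixes D D' Q Q' R R' G G' H H' H'' P S T :: "'a::comm_ring_1"
  assumes E1: "D*G = Q*H' + R*H" and E2: "D'*G + D*G' = Q'*H' + Q*H'' + R'*H + R*H'" and E3: "P*H'' = S*H' + T*H"
  shows "P*D*D*G' = (P*D*(Q'+R) + D*Q*S - P*D'*Q)*H' + (D*Q*T + P*D*R' - P*D'*R)*H"
proof -
  have e: "D*G' = Q'*H' + Q*H'' + R'*H + R*H' - D'*G" using E2 by (simp add: algebra_simps)
  have "P*D*D*G' = P*D*(D*G')" by (simp add: algebra_simps)
  also have "\<dots> = P*D*(Q'*H' + R'*H + R*H') + D*Q*(P*H'') - P*D'*(D*G)" unfolding e by (simp add: algebra_simps)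
  also have "\<dots> = P*D*(Q'*H' + R'*H + R*H') + D*Q*(S*H' + T*H) - P*D'*(Q*H' + R*H)" unfolding E1 E3 ..
  also have "\<dots> = (P*D*(Q'+R) + D*Q*S - P*D'*Q)*H' + (D*Q*T + P*D*R' - P*D'*R)*H" by (simp add: algebra_simps)
  finally show ?thesis .
qed

lemma L1: "fp [:0,1,-1:] = fps_X - fps_X * fps_X"
  by (simp add: fps_of_poly_pCons algebra_simps)
lemma L2: "fp [:u, v:] = fps_const u + fps_const v * fps_X"
  by (simp add: fps_of_poly_pCons fps_of_poly_const)
lemma L3: "fp [:u:] = fps_const u"
  by (simp add: fps_of_poly_const)

lemma Hf_ode2:
  assumes "c \<notin> \<int>"
  shows "fp [:0,1,-1:] * fps_deriv (fps_deriv (Hf a b c)) = fp [:-c, a+b+1:] * fps_deriv (Hf a b c) + fp [:a*b:] * Hf a b c"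
proof -
  define H where "H = Hf a b c"
  define D1 where "D1 = fps_deriv H"
  define D2 where "D2 = fps_deriv D1"
  define A where "A = fps_const (a+b)"
  define C where "C = fps_const c"
  define B where "B = fps_const (a*b)"
  have dX: "fps_deriv (fps_X * D1) = D1 + fps_X * D2"
    unfolding D2_def by (simp add: fps_deriv_mult)
  have E: "fps_X * D2 + C * D1 = fps_X * fps_deriv (fps_X * D1) + A * (fps_X * D1) + B * H"
    using Hf_ode[OF assms, of a b] unfolding H_def theta_def D1_def D2_def A_def B_def C_def .
  have E': "fps_X * D2 + C * D1 = fps_X * (D1 + fps_X * D2) + A * (fps_X * D1) + B * H"
    using E unfolding dX .
  have r1: "fp [:-c, a+b+1:] = - C + (A + 1) * fps_X"
    unfolding L2 A_def C_def by (simp add: fps_const_add fps_const_neg)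
  have "fp [:0,1,-1:] * D2 = (- C + (A + 1) * fps_X) * D1 + B * H"
    unfolding L1 using E' by (simp add: algebra_simps)
  then show ?thesis unfolding r1[symmetric] B_def L3[symmetric] D2_def D1_def H_def .
qed

definition inspan :: "complex \<Rightarrow> complex \<Rightarrow> complex \<Rightarrow> complex fps \<Rightarrow> bool" where
  "inspan a b c G \<longleftrightarrow> (\<exists>d q r. d \<noteq> 0 \<and> fp d * G = fp q * fps_deriv (Hf a b c) + fp r * Hf a b c)"

lemma inspan_base: "inspan a b c (Hf a b c)"
  unfolding inspan_def by (rule exI[of _ 1], rule exI[of _ 0], rule exI[of _ 1]) simp

lemma inspan_deriv:
  assumes "c \<notin> \<int>" "inspan a b c G"
  shows "inspan a b c (fps_deriv G)"
proof -
  obtain d q r where d: "d \<noteq> 0" and E1: "fp d * G = fp q * fps_deriv (Hf a b c) + fp r * Hf a b c"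
    using assms(2) unfolding inspan_def by blast
  define P where "P = [:0,1,-1::complex:]"
  have P: "P \<noteq> 0" by (simp add: P_def)
  have E2: "fp (pderiv d) * G + fp d * fps_deriv G = fp (pderiv q) * fps_deriv (Hf a b c) + fp q * fps_deriv (fps_deriv (Hf a b c))
      + fp (pderiv r) * Hf a b c + fp r * fps_deriv (Hf a b c)"
    using arg_cong[OF E1, of fps_deriv] by (simp add: fps_of_poly_pderiv algebra_simps)
  have E3: "fp P * fps_deriv (fps_deriv (Hf a b c)) = fp [:-c, a+b+1:] * fps_deriv (Hf a b c) + fp [:a*b:] * Hf a b c"
    using Hf_ode2[OF assms(1)] unfolding P_def .
  have "fp P * fp d * fp d * fps_deriv G =
     (fp P * fp d * (fp (pderiv q) + fp r) + fp d * fp q * fp [:-c, a+b+1:] - fp P * fp (pderiv d) * fp q) * fps_deriv (Hf a b c)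
     + (fp d * fp q * fp [:a*b:] + fp P * fp d * fp (pderiv r) - fp P * fp (pderiv d) * fp r) * Hf a b c"
    by (rule deriv_aux[OF E1 E2 E3])
  then have "fp (P*d*d) * fps_deriv G =
     fp (P * d * (pderiv q + r) + d * q * [:-c, a+b+1:] - P * pderiv d * q) * fps_deriv (Hf a b c)
     + fp (d * q * [:a*b:] + P * d * pderiv r - P * pderiv d * r) * Hf a b c"
    by (simp only: fps_of_poly_mult fps_of_poly_add fps_of_poly_diff)
  moreover have "P*d*d \<noteq> 0" using P d by simp
  ultimately show ?thesis unfolding inspan_def by blast
qed

lemma inspan_lin:
  assumes "inspan a b c G1" "inspan a b c G2"
  shows "inspan a b c (fp p1 * G1 + fp p2 * G2)"
proof -
  obtain d1 q1 r1 where d1: "d1 \<noteq> 0" and E1: "fp d1 * G1 = fp q1 * fps_deriv (Hf a b c) + fp r1 * Hf a b c"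
    using assms(1) unfolding inspan_def by blast
  obtain d2 q2 r2 where d2: "d2 \<noteq> 0" and E2: "fp d2 * G2 = fp q2 * fps_deriv (Hf a b c) + fp r2 * Hf a b c"
    using assms(2) unfolding inspan_def by blast
  have "fp (d1*d2) * (fp p1 * G1 + fp p2 * G2) = fp p1 * fp d2 * (fp d1 * G1) + fp p2 * fp d1 * (fp d2 * G2)"
    by (simp add: fps_of_poly_mult algebra_simps)
  also have "\<dots> = fp (p1*d2*q1 + p2*d1*q2) * fps_deriv (Hf a b c) + fp (p1*d2*r1 + p2*d1*r2) * Hf a b c"
    unfolding E1 E2 by (simp add: fps_of_poly_mult fps_of_poly_add algebra_simps)
  finally show ?thesis using d1 d2 unfolding inspan_def by (metis mult_eq_0_iff)
qed

lemma inspan_const: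
  assumes "k \<noteq> 0" "inspan a b c (fps_const k * G)"
  shows "inspan a b c G"
proof -
  obtain d q r where d: "d \<noteq> 0" and E1: "fp d * (fps_const k * G) = fp q * fps_deriv (Hf a b c) + fp r * Hf a b c"
    using assms(2) unfolding inspan_def by blast
  have "fp (smult k d) * G = fp d * (fps_const k * G)" by (simp add: fps_of_poly_smult algebra_simps)
  then show ?thesis using E1 d assms(1) unfolding inspan_def by (metis smult_eq_0_iff)
qed

lemma inspan_eq: "inspan a b c G \<Longrightarrow> G = G' \<Longrightarrow> inspan a b c G'" by simp


lemma nint_shift: "(x::complex) \<notin> \<int> \<Longrightarrow> x + of_int k \<notin> \<int>"
  by (metis Ints_diff Ints_of_int add_diff_cancel_right')

definition good :: "complex \<Rightarrow> complex \<Rightarrow> complex \<Rightarrow> bool" where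
  "good \<alpha> \<beta> \<gamma> \<longleftrightarrow> \<alpha> \<notin> \<int> \<and> \<beta> \<notin> \<int> \<and> \<gamma> \<notin> \<int> \<and> \<gamma> - \<alpha> \<notin> \<int> \<and> \<gamma> - \<beta> \<notin> \<int>"

lemma good_shift:
  assumes "standing a b c"
  shows "good (a + of_int k) (b + of_int l) (c + of_int m)"
proof -
  have e1: "c + of_int m - (a + of_int k) = (c - a) + of_int (m - k)" by simp
  have e2: "c + of_int m - (b + of_int l) = (c - b) + of_int (m - l)" by simp
  show ?thesis using assms unfolding good_def standing_def e1 e2 by (simp add: nint_shift)
qed

lemma sh_raise_a:
  assumes "c \<notin> \<int>" "\<alpha> \<noteq> 0" "inspan a b c (Hf \<alpha> \<beta> \<gamma>)"
  shows "inspan a b c (Hf (\<alpha>+1) \<beta> \<gamma>)"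
proof -
  have "inspan a b c (fp [:\<alpha>:] * Hf \<alpha> \<beta> \<gamma> + fp [:0,1:] * fps_deriv (Hf \<alpha> \<beta> \<gamma>))"
    by (rule inspan_lin[OF assms(3) inspan_deriv[OF assms(1,3)]])
  also have "fp [:\<alpha>:] * Hf \<alpha> \<beta> \<gamma> + fp [:0,1:] * fps_deriv (Hf \<alpha> \<beta> \<gamma>) = fps_const \<alpha> * Hf (\<alpha>+1) \<beta> \<gamma>"
    unfolding L3 Hf_raise_a by simp
  finally show ?thesis by (rule inspan_const[OF assms(2)])
qed

lemma sh_raise_b:
  assumes "c \<notin> \<int>" "\<beta> \<noteq> 0" "inspan a b c (Hf \<alpha> \<beta> \<gamma>)"
  shows "inspan a b c (Hf \<alpha> (\<beta>+1) \<gamma>)"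
proof -
  have "inspan a b c (Hf \<beta> \<alpha> \<gamma>)" using assms(3) Hf_sym[of \<alpha> \<beta> \<gamma>] by simp
  from sh_raise_a[OF assms(1,2) this] show ?thesis using Hf_sym[of "\<beta>+1" \<alpha> \<gamma>] by simp
qed

lemma sh_lower_c:
  assumes "c \<notin> \<int>" "\<gamma> \<notin> \<int>" "inspan a b c (Hf \<alpha> \<beta> \<gamma>)"
  shows "inspan a b c (Hf \<alpha> \<beta> (\<gamma>-1))"
proof -
  have "inspan a b c (fp [:\<gamma>-1:] * Hf \<alpha> \<beta> \<gamma> + fp [:0,1:] * fps_deriv (Hf \<alpha> \<beta> \<gamma>))"
    by (rule inspan_lin[OF assms(3) inspan_deriv[OF assms(1,3)]])
  also have "fp [:\<gamma>-1:] * Hf \<alpha> \<beta> \<gamma> + fp [:0,1:] * fps_deriv (Hf \<alpha> \<beta> \<gamma>) = fps_const (\<gamma>-1) * Hf \<alpha> \<beta> (\<gamma>-1)"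
    unfolding L3 Hf_lower_c[OF assms(2)] by simp
  finally have X: "inspan a b c (fps_const (\<gamma> - 1) * Hf \<alpha> \<beta> (\<gamma>-1))" .
  have "\<gamma> - 1 \<noteq> 0" using assms(2) by auto
  from inspan_const[OF this X] show ?thesis .
qed

lemma sh_lower_a:
  assumes "c \<notin> \<int>" "\<gamma> \<notin> \<int>" "\<gamma> - \<alpha> \<noteq> 0" "inspan a b c (Hf \<alpha> \<beta> \<gamma>)"
  shows "inspan a b c (Hf (\<alpha>-1) \<beta> \<gamma>)"
proof -
  have "inspan a b c (fp [:0,1,-1:] * fps_deriv (Hf \<alpha> \<beta> \<gamma>) + fp [:\<gamma>-\<alpha>, -\<beta>:] * Hf \<alpha> \<beta> \<gamma>)"
    by (rule inspan_lin[OF inspan_deriv[OF assms(1,4)] assms(4)])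
  also have "fp [:0,1,-1:] * fps_deriv (Hf \<alpha> \<beta> \<gamma>) + fp [:\<gamma>-\<alpha>, -\<beta>:] * Hf \<alpha> \<beta> \<gamma> = fps_const (\<gamma>-\<alpha>) * Hf (\<alpha>-1) \<beta> \<gamma>"
    unfolding L1 L2 Hf_lower_a[OF assms(2)] by (simp del: fps_const_neg add: fps_const_neg[symmetric] algebra_simps)
  finally show ?thesis by (rule inspan_const[OF assms(3)])
qed

lemma sh_lower_b:
  assumes "c \<notin> \<int>" "\<gamma> \<notin> \<int>" "\<gamma> - \<beta> \<noteq> 0" "inspan a b c (Hf \<alpha> \<beta> \<gamma>)"
  shows "inspan a b c (Hf \<alpha> (\<beta>-1) \<gamma>)"
proof -
  have "inspan a b c (Hf \<beta> \<alpha> \<gamma>)" using assms(4) Hf_sym[of \<alpha> \<beta> \<gamma>] by simp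
  from sh_lower_a[OF assms(1,2,3) this] show ?thesis using Hf_sym[of "\<beta>-1" \<alpha> \<gamma>] by simp
qed

lemma sh_raise_c:
  assumes "c \<notin> \<int>" "good \<alpha> \<beta> \<gamma>" "inspan a b c (Hf \<alpha> \<beta> \<gamma>)"
  shows "inspan a b c (Hf \<alpha> \<beta> (\<gamma>+1))"
proof -
  have g: "\<alpha> \<noteq> 0" "\<beta> \<noteq> 0" "\<gamma> \<notin> \<int>" "\<gamma> \<noteq> 0" "\<gamma> - \<alpha> \<noteq> 0" "\<gamma> - \<beta> \<noteq> 0" "\<gamma> + 1 \<notin> \<int>"
    using assms(2) nint_plus1 unfolding good_def by auto
  have "inspan a b c (fps_deriv (Hf \<alpha> \<beta> \<gamma>))" by (rule inspan_deriv[OF assms(1,3)])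
  then have "inspan a b c (fps_const (\<alpha>*\<beta>/\<gamma>) * Hf (\<alpha>+1) (\<beta>+1) (\<gamma>+1))"
    unfolding Hf_deriv[OF g(3)] .
  moreover have "\<alpha>*\<beta>/\<gamma> \<noteq> 0" using g by auto
  ultimately have "inspan a b c (Hf (\<alpha>+1) (\<beta>+1) (\<gamma>+1))"
    using inspan_const by blast
  moreover have "\<gamma> + 1 - (\<alpha> + 1) \<noteq> 0" using g by simp
  ultimately have "inspan a b c (Hf (\<alpha>+1-1) (\<beta>+1) (\<gamma>+1))"
    using sh_lower_a[OF assms(1) g(7)] by blast
  then have "inspan a b c (Hf \<alpha> (\<beta>+1) (\<gamma>+1))" by simp
  moreover have "\<gamma> + 1 - (\<beta> + 1) \<noteq> 0" using g by simp
  ultimately have "inspan a b c (Hf \<alpha> (\<beta>+1-1) (\<gamma>+1))"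
    using sh_lower_b[OF assms(1) g(7)] by blast
  then show ?thesis by simp
qed

lemma existence_fps:
  assumes "standing a b c"
  shows "inspan a b c (Hf (a + of_int k) (b + of_int l) (c + of_int m))"
proof -
  have c: "c \<notin> \<int>" using assms unfolding standing_def by auto
  have gd: "\<And>k l m. good (a + of_int k) (b + of_int l) (c + of_int m)" using good_shift[OF assms] .
  have ep: "\<And>x::complex. \<And>i::int. x + of_int (i+1) = x + of_int i + 1" by simp
  have em: "\<And>x::complex. \<And>i::int. x + of_int (i-1) = x + of_int i - 1" by simp
  have M: "inspan a b c (Hf a b (c + of_int m))" for m
  proof (induction m rule: int_induct[where k=0])
    case base then show ?case using inspan_base by simp
  next
    case (step1 i)
    have g: "good a b (c + of_int i)" using gd[of 0 0 i] by simp
    show ?case unfolding ep by (rule sh_raise_c[OF c g step1(2)])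
  next
    case (step2 i)
    have g: "c + of_int i \<notin> \<int>" using gd[of 0 0 i] unfolding good_def by simp
    show ?case unfolding em by (rule sh_lower_c[OF c g step2(2)])
  qed
  have L: "inspan a b c (Hf a (b + of_int l) (c + of_int m))" for l m
  proof (induction l rule: int_induct[where k=0])
    case base then show ?case using M by simp
  next
    case (step1 i)
    have g: "b + of_int i \<noteq> 0" using nint_shift[of b i] assms unfolding standing_def by (metis Ints_0)
    show ?case unfolding ep by (rule sh_raise_b[OF c g step1(2)])
  next
    case (step2 i)
    have g: "c + of_int m \<notin> \<int>" "c + of_int m - (b + of_int i) \<noteq> 0" using gd[of 0 i m] unfolding good_def by auto
    show ?case unfolding em by (rule sh_lower_b[OF c g step2(2)])
  qed
  show ?thesis
  proof (induction k rule: int_induct[where k=0])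
    case base then show ?case using L by simp
  next
    case (step1 i)
    have g: "a + of_int i \<noteq> 0" using nint_shift[of a i] assms unfolding standing_def by (metis Ints_0)
    show ?case unfolding ep by (rule sh_raise_a[OF c g step1(2)])
  next
    case (step2 i)
    have g: "c + of_int m \<notin> \<int>" "c + of_int m - (a + of_int i) \<noteq> 0" using gd[of i l m] unfolding good_def by auto
    show ?case unfolding em by (rule sh_lower_a[OF c g step2(2)])
  qed
qed


definition ricE :: "complex \<Rightarrow> complex \<Rightarrow> complex \<Rightarrow> complex poly \<Rightarrow> complex poly \<Rightarrow> complex poly" where
  "ricE a b c P Q = [:0,1,-1:] * (Q * pderiv P - P * pderiv Q + P * P) + [:c, -(a+b+1):] * P * Q - [:a*b:] * Q * Q"

lemma px_split: "[:0,1,-1::complex:] = - ([:0,1:] * [:-1,1:])"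
  by simp

lemma id_sq: fixes X w Q2 P P' Q2' C T :: "'a::comm_ring_1"
  shows "(- (X*w))*((w*w*Q2)*P' - P*(w*(Q2 + Q2 + w*Q2')) + P*P) + C*P*(w*w*Q2) - T*(w*w*Q2)*(w*w*Q2)
       = w*(w*(- X*(w*Q2*P' - P*(Q2 + Q2 + w*Q2')) + C*P*Q2 - T*w*w*Q2*Q2) - X*P*P)"
  by (simp add: algebra_simps)

lemma id_res: fixes X w Q1 P P' Q1' C T :: "'a::comm_ring_1"
  shows "(- (X*w))*((w*Q1)*P' - P*(Q1 + w*Q1') + P*P) + C*P*(w*Q1) - T*(w*Q1)*(w*Q1)
       = w*(- X*(w*Q1*P' - P*(Q1 + w*Q1') + P*P) + C*P*Q1 - T*w*Q1*Q1)"
  by (simp add: algebra_simps)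

lemma cop_root:
  assumes "coprime P (Q::complex poly)" "poly Q z = 0"
  shows "poly P z \<noteq> 0"
proof
  assume "poly P z = 0"
  then have "[:-z,1:] dvd P" "[:-z,1:] dvd Q" using assms poly_eq_0_iff_dvd by auto
  then have "is_unit [:-z,1::complex:]" using assms(1) coprime_common_divisor by blast
  then show False by (simp add: is_unit_poly_iff)
qed

lemma poly_ricE: "poly (ricE a b c P Q) z = z * (1 - z) * (poly Q z * poly (pderiv P) z - poly P z * poly (pderiv Q) z + poly P z * poly P z)
   + (c - (a+b+1) * z) * poly P z * poly Q z - a * b * poly Q z * poly Q z"
  unfolding ricE_def by (simp add: algebra_simps)

lemma split_root:
  assumes "poly Q z = (0::complex)"
  obtains Q1 where "Q = [:-z,1:] * Q1" "pderiv Q = Q1 + [:-z,1:] * pderiv Q1"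
proof -
  obtain Q1 where q: "Q = [:-z,1:] * Q1" using assms poly_eq_0_iff_dvd by (metis dvdE)
  have "pderiv Q = pderiv [:-z,1:] * Q1 + [:-z,1:] * pderiv Q1" unfolding q by (simp only: pderiv_mult ac_simps)
  moreover have "pderiv [:-z,1:] = 1" by (simp add: pderiv_pCons)
  ultimately have "pderiv Q = Q1 + [:-z,1:] * pderiv Q1" by simp
  then show ?thesis using q that by blast
qed

lemma ric_sq:
  assumes cop: "coprime P Q" and q0: "poly Q 0 \<noteq> 0" and E: "ricE a b c P Q = 0" and z: "poly Q z = 0"
  shows "poly (pderiv Q) z \<noteq> 0"
proof
  assume d: "poly (pderiv Q) z = 0"
  have pz: "poly P z \<noteq> 0" using cop_root[OF cop z] .
  have z0: "z \<noteq> 0" using q0 z by auto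
  show False
  proof (cases "z = 1")
    case False
    have "poly (ricE a b c P Q) z = z * (1 - z) * (poly P z * poly P z)"
      unfolding poly_ricE using z d by simp
    then show False using E z0 False pz by simp
  next
    case True
    define w where "w = [:-1,1::complex:]"
    define X where "X = [:0,1::complex:]"
    have w0: "w \<noteq> 0" by (simp add: w_def)
    obtain Q1 where q1: "Q = w * Q1" "pderiv Q = Q1 + w * pderiv Q1"
      using split_root[of Q z] z True unfolding w_def by auto
    have "poly Q1 1 = 0" using d True q1(2) by (simp add: w_def)
    then obtain Q2 where q2: "Q1 = w * Q2" "pderiv Q1 = Q2 + w * pderiv Q2"
      using split_root[of Q1 1] unfolding w_def by auto
    have Qe: "Q = w*w*Q2" using q1 q2 by (simp add: mult.assoc)
    have Qd: "pderiv Q = w*(Q2 + Q2 + w*pderiv Q2)" unfolding q1(2) q2(2) unfolding q2(1) by (simp add: algebra_simps)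
    have "ricE a b c P Q = w*(w*(- X*(w*Q2*pderiv P - P*(Q2 + Q2 + w*pderiv Q2)) + [:c, -(a+b+1):]*P*Q2 - [:a*b:]*w*w*Q2*Q2) - X*P*P)"
      unfolding ricE_def Qd px_split unfolding Qe X_def[symmetric] w_def[symmetric]
      by (rule id_sq)
    then have "w*(- X*(w*Q2*pderiv P - P*(Q2 + Q2 + w*pderiv Q2)) + [:c, -(a+b+1):]*P*Q2 - [:a*b:]*w*w*Q2*Q2) - X*P*P = 0"
      using E w0 by simp
    then have "poly (w*(- X*(w*Q2*pderiv P - P*(Q2 + Q2 + w*pderiv Q2)) + [:c, -(a+b+1):]*P*Q2 - [:a*b:]*w*w*Q2*Q2) - X*P*P) 1 = 0"
      by simp
    then have "poly (X*P*P) 1 = 0" by (simp add: w_def)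
    then show False using pz True by (simp add: X_def)
  qed
qed

lemma ric_res:
  assumes cop: "coprime P Q" and q0: "poly Q 0 \<noteq> 0" and E: "ricE a b c P Q = 0" and z: "poly Q z = 0"
  shows "poly P z = (if z = 1 then c - a - b else 1) * poly (pderiv Q) z"
proof -
  have pz: "poly P z \<noteq> 0" using cop_root[OF cop z] .
  have z0: "z \<noteq> 0" using q0 z by auto
  show ?thesis
  proof (cases "z = 1")
    case False
    have "poly (ricE a b c P Q) z = z * (1 - z) * (poly P z * (poly P z - poly (pderiv Q) z))"
      unfolding poly_ricE using z by (simp add: algebra_simps)
    then have "poly P z - poly (pderiv Q) z = 0" using E z0 False pz by simp
    then show ?thesis using False by simp
  next
    case True
    define w where "w = [:-1,1::complex:]"
    define X where "X = [:0,1::complex:]"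
    have w0: "w \<noteq> 0" by (simp add: w_def)
    obtain Q1 where q1: "Q = w * Q1" "pderiv Q = Q1 + w * pderiv Q1"
      using split_root[of Q z] z True unfolding w_def by auto
    define M where "M = - X*(w*Q1*pderiv P - P*(Q1 + w*pderiv Q1) + P*P) + [:c, -(a+b+1):]*P*Q1 - [:a*b:]*w*Q1*Q1"
    have "ricE a b c P Q = w * M"
      unfolding ricE_def q1(2) px_split unfolding q1(1) X_def[symmetric] w_def[symmetric] M_def
      by (rule id_res)
    then have M0: "M = 0" using E w0 by simp
    have "poly M 1 = poly P 1 * (poly Q1 1 - poly P 1 + (c - (a+b+1)) * poly Q1 1)"
      unfolding M_def X_def w_def by (simp add: algebra_simps)
    then have "poly Q1 1 - poly P 1 + (c - (a+b+1)) * poly Q1 1 = 0" using M0 pz True by simp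
    moreover have "poly (pderiv Q) 1 = poly Q1 1" using q1(2) by (simp add: w_def)
    ultimately show ?thesis using True by (simp add: algebra_simps)
  qed
qed

lemma sqfree_dvd:
  fixes Q F :: "complex poly"
  assumes sq: "\<forall>z. poly Q z = 0 \<longrightarrow> poly (pderiv Q) z \<noteq> 0" and Q0: "Q \<noteq> 0"
      and rt: "\<forall>z. poly Q z = 0 \<longrightarrow> poly F z = 0"
  shows "Q dvd F"
proof (cases "F = 0")
  case True then show ?thesis by simp
next
  case False
  have rsq: "rsquarefree Q" using sq unfolding rsquarefree_roots by auto
  define ZQ where "ZQ = {z. poly Q z = 0}"
  define ZF where "ZF = {z. poly F z = 0}"
  have fin: "finite ZF" using poly_roots_finite[OF False] by (simp add: ZF_def)
  have sub: "ZQ \<subseteq> ZF" using rt by (auto simp: ZQ_def ZF_def)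
  have "(\<Prod>z\<in>ZQ. [:-z, 1:]) dvd (\<Prod>z\<in>ZQ. [:-z, 1:] ^ order z F)"
  proof (rule prod_dvd_prod)
    fix z assume "z \<in> ZQ"
    then have "poly F z = 0" using sub by (auto simp: ZF_def)
    then have "order z F \<noteq> 0" using False order_root by blast
    then show "[:-z, 1:] dvd [:-z, 1:] ^ order z F" by (simp add: dvd_power)
  qed
  also have "\<dots> dvd (\<Prod>z\<in>ZF. [:-z, 1:] ^ order z F)"
    by (rule prod_dvd_prod_subset[OF fin sub])
  finally have d: "(\<Prod>z\<in>ZQ. [:-z, 1:]) dvd (\<Prod>z\<in>ZF. [:-z, 1:] ^ order z F)" .
  have eQ: "smult (lead_coeff Q) (\<Prod>z\<in>ZQ. [:-z, 1:]) = Q"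
    using complex_poly_decompose_rsquarefree[OF rsq] by (simp add: ZQ_def)
  have eF: "smult (lead_coeff F) (\<Prod>z\<in>ZF. [:-z, 1:] ^ order z F) = F"
    using complex_poly_decompose[of F] by (simp add: ZF_def)
  have "smult (lead_coeff Q) (\<Prod>z\<in>ZQ. [:-z, 1:]) dvd smult (lead_coeff F) (\<Prod>z\<in>ZF. [:-z, 1:] ^ order z F)"
    using d Q0 by (simp add: smult_dvd_iff dvd_smult)
  then show ?thesis unfolding eQ eF .
qed

lemma coeff_mult_top:
  fixes A B :: "'a::idom poly"
  assumes "degree A \<le> m" "degree B \<le> k"
  shows "coeff (A*B) (m+k) = coeff A m * coeff B k"
proof (cases "degree A = m \<and> degree B = k")
  case True
  then show ?thesis using coeff_mult_degree_sum[of A B] by simp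
next
  case False
  then have "degree A < m \<or> degree B < k" using assms by auto
  then have r: "coeff A m * coeff B k = 0" by (auto simp: coeff_eq_0)
  have "degree (A*B) < m + k" using degree_mult_le[of A B] \<open>degree A < m \<or> degree B < k\<close> assms by linarith
  then show ?thesis using r by (simp add: coeff_eq_0)
qed

lemma coeff_mult_top3:
  fixes A B C :: "'a::idom poly"
  assumes "degree A \<le> m" "degree B \<le> k" "degree C \<le> l"
  shows "coeff (A*B*C) (m+k+l) = coeff A m * coeff B k * coeff C l"
proof -
  have "degree (A*B) \<le> m + k" using degree_mult_le[of A B] assms by linarith
  then show ?thesis using coeff_mult_top[OF _ assms(3)] coeff_mult_top[OF assms(1,2)] by simp
qed

definition xd :: "complex poly \<Rightarrow> complex poly" where "xd P = [:0,1:] * pderiv P"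

lemma coeff_xd: "coeff (xd P) k = of_nat k * coeff P k"
  by (cases k) (simp_all add: xd_def coeff_pderiv del: of_nat_Suc)

lemma degree_xd: "degree (xd P) \<le> degree P"
  by (rule degree_le) (simp add: coeff_xd coeff_eq_0)

lemma id_alt: fixes Px L X Q P P' Q' XP XQ C T :: "'a::comm_ring_1"
  assumes "Px = L*X" "XP = X*P'" "XQ = X*Q'"
  shows "Px*(Q*P' - P*Q' + P*P) + C*P*Q - T*Q*Q = L*Q*XP - L*P*XQ + Px*P*P + C*P*Q - T*Q*Q"
  unfolding assms by (simp add: algebra_simps)

lemma ricE_alt: "ricE a b c P Q = [:1,-1:]*Q*(xd P) - [:1,-1:]*P*(xd Q) + [:0,1,-1:]*P*P
   + [:c, -(a+b+1):]*P*Q - [:a*b:]*Q*Q"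
  unfolding ricE_def by (rule id_alt[where X="[:0,1:]"]) (simp_all add: xd_def)

lemma top_coeff:
  assumes n: "degree Q = n" "n \<ge> 1" and dP: "degree P \<le> n - 1"
  shows "coeff (ricE a b c P Q) (2*n) = - ((coeff P (n-1) + a * lead_coeff Q) * (coeff P (n-1) + b * lead_coeff Q))"
proof -
  define p where "p = coeff P (n-1)"
  define q where "q = lead_coeff Q"
  have dQ: "degree Q \<le> n" using n by simp
  have dDP: "degree (xd P) \<le> n - 1" using degree_xd[of P] dP by linarith
  have dDQ: "degree (xd Q) \<le> n" using degree_xd[of Q] dQ by linarith
  have i1: "2*n = 1 + n + (n-1)" "2*n = 1 + (n-1) + n" "2*n = 2 + (n-1) + (n-1)" "2*n = 0 + n + n"
    using n by auto
  have t1: "coeff ([:1,-1:]*Q*(xd P)) (2*n) = - q * (of_nat (n-1) * p)"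
    unfolding i1(1) by (subst coeff_mult_top3[OF _ dQ dDP]) (simp_all add: coeff_xd p_def q_def n)
  have t2: "coeff ([:1,-1:]*P*(xd Q)) (2*n) = - p * (of_nat n * q)"
    unfolding i1(2) by (subst coeff_mult_top3[OF _ dP dDQ]) (simp_all add: coeff_xd p_def q_def n)
  have t3: "coeff ([:0,1,-1:]*P*P) (2*n) = - p * p"
    unfolding i1(3) by (subst coeff_mult_top3[OF _ dP dP]) (simp_all add: p_def numeral_2_eq_2)
  have t4: "coeff ([:c, -(a+b+1):]*P*Q) (2*n) = - (a+b+1) * p * q"
    unfolding i1(2) by (subst coeff_mult_top3[OF _ dP dQ]) (simp_all add: p_def q_def n)
  have t5: "coeff ([:a*b:]*Q*Q) (2*n) = a * b * q * q"
    unfolding i1(4) by (subst coeff_mult_top3[OF _ dQ dQ]) (simp_all add: q_def n)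
  have nn: "of_nat (n-1) = (of_nat n - 1 :: complex)" using n by (simp add: of_nat_diff)
  show ?thesis unfolding ricE_alt coeff_add coeff_diff t1 t2 t3 t4 t5 p_def[symmetric] q_def[symmetric] nn
    by (simp add: algebra_simps)
qed

lemma deg3: "degree (A*B*C) \<le> degree A + degree B + degree (C::'a::idom poly)"
  using degree_mult_le[of "A*B" C] degree_mult_le[of A B] by linarith

lemma deg_lt:
  assumes st: "standing a b c" and E: "ricE a b c P Q = 0" and Q0: "Q \<noteq> 0"
  shows "degree P < degree Q"
proof (rule ccontr)
  assume "\<not> degree P < degree Q"
  then have le: "degree Q \<le> degree P" by simp
  have ab: "a \<noteq> 0" "b \<noteq> 0" using st unfolding standing_def by auto
  show False
  proof (cases "P = 0")
    case True
    have "ricE a b c P Q = - ([:a*b:] * (Q * Q))" unfolding ricE_def True by (simp add: mult.assoc)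
    moreover have "[:a*b:] * (Q * Q) \<noteq> 0" using ab Q0 by simp
    ultimately show False using E by simp
  next
    case False
    define p where "p = degree P"
    define n where "n = degree Q"
    have np: "n \<le> p" using le by (simp add: n_def p_def)
    have dc: "degree [:c, -(a+b+1):] \<le> 1" by (simp add: degree_pCons_le)
    have d1: "degree ([:1,-1:]*Q*(xd P)) < 2*p+2"
      using deg3[of "[:1,-1:]" Q "xd P"] degree_xd[of P] np unfolding n_def p_def by simp
    have d2: "degree ([:1,-1:]*P*(xd Q)) < 2*p+2"
      using deg3[of "[:1,-1:]" P "xd Q"] degree_xd[of Q] np unfolding n_def p_def by simp
    have d4: "degree ([:c, -(a+b+1):]*P*Q) < 2*p+2"
      using deg3[of "[:c, -(a+b+1):]" P Q] dc np unfolding n_def p_def by linarith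
    have d5: "degree ([:a*b:]*Q*Q) < 2*p+2"
      using deg3[of "[:a*b:]" Q Q] np unfolding n_def p_def by simp
    have z1: "coeff ([:1,-1:]*Q*(xd P)) (2*p+2) = 0" using d1 by (rule coeff_eq_0)
    have z2: "coeff ([:1,-1:]*P*(xd Q)) (2*p+2) = 0" using d2 by (rule coeff_eq_0)
    have z4: "coeff ([:c, -(a+b+1):]*P*Q) (2*p+2) = 0" using d4 by (rule coeff_eq_0)
    have z5: "coeff ([:a*b:]*Q*Q) (2*p+2) = 0" using d5 by (rule coeff_eq_0)
    have i3: "2*p+2 = 2 + p + p" by simp
    have t3: "coeff ([:0,1,-1:]*P*P) (2*p+2) = - lead_coeff P * lead_coeff P"
      unfolding i3 by (subst coeff_mult_top3) (simp_all add: p_def numeral_2_eq_2)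
    have "coeff (ricE a b c P Q) (2*p+2) = - lead_coeff P * lead_coeff P"
      unfolding ricE_alt coeff_add coeff_diff z1 z2 z4 z5 t3 by simp
    then show False using E False by simp
  qed
qed

lemma ric_poly_false:
  assumes st: "standing a b c" and cop: "coprime P Q" and Q0: "Q \<noteq> 0" and q0: "poly Q 0 \<noteq> 0"
    and E: "ricE a b c P Q = 0"
  shows False
proof -
  have sq: "\<forall>z. poly Q z = 0 \<longrightarrow> poly (pderiv Q) z \<noteq> 0" using ric_sq[OF cop q0 E] by blast
  have res: "\<And>z. poly Q z = 0 \<Longrightarrow> poly P z = (if z = 1 then c - a - b else 1) * poly (pderiv Q) z"
    using ric_res[OF cop q0 E] by blast
  define n where "n = degree Q"
  have dlt: "degree P < n" using deg_lt[OF st E Q0] by (simp add: n_def)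
  then have n1: "n \<ge> 1" by simp
  have dP: "degree P \<le> n - 1" using dlt by simp
  define q where "q = lead_coeff Q"
  have q0': "q \<noteq> 0" using Q0 by (simp add: q_def)
  have top: "coeff P (n-1) + a * q = 0 \<or> coeff P (n-1) + b * q = 0"
  proof -
    have "coeff (ricE a b c P Q) (2*n) = - ((coeff P (n-1) + a * q) * (coeff P (n-1) + b * q))"
      using top_coeff[of Q n P a b c] n1 dP by (simp add: n_def q_def)
    then show ?thesis using E by simp
  qed
  have cpd: "coeff (pderiv Q) (n-1) = of_nat n * q"
    using n1 by (simp add: coeff_pderiv q_def n_def del: of_nat_Suc)
  show False
  proof (cases "poly Q 1 = 0")
    case False
    define F where "F = P - pderiv Q"
    have "\<forall>z. poly Q z = 0 \<longrightarrow> poly F z = 0"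
    proof (intro allI impI)
      fix z assume z: "poly Q z = 0"
      then have "z \<noteq> 1" using False by auto
      then show "poly F z = 0" using res[OF z] unfolding F_def by simp
    qed
    then have dv: "Q dvd F" using sqfree_dvd[OF sq Q0] by blast
    have "degree F < n" unfolding F_def using dlt n1
      by (intro le_less_trans[OF degree_diff_le_max]) (auto simp: degree_pderiv n_def)
    then have "F = 0" using dv dvd_imp_degree_le[of Q F] by (auto simp: n_def)
    then have "P = pderiv Q" by (simp add: F_def)
    then have cP: "coeff P (n-1) = of_nat n * q" using cpd by simp
    have "(of_nat n + a) * q = 0 \<or> (of_nat n + b) * q = 0" using top unfolding cP by (simp add: algebra_simps)
    then have "of_nat n + a = 0 \<or> of_nat n + b = 0" using q0' by simp
    then have "a = - of_nat n \<or> b = - of_nat n" by (auto simp: add_eq_0_iff2 add.commute)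
    then have "a \<in> \<int> \<or> b \<in> \<int>" by auto
    then show False using st unfolding standing_def by auto
  next
    case True
    define w where "w = [:-1,1::complex:]"
    obtain Q1 where q1: "Q = w * Q1" "pderiv Q = Q1 + w * pderiv Q1"
      using split_root[of Q 1] True unfolding w_def by auto
    have Q10: "Q1 \<noteq> 0" using Q0 q1 by auto
    have w0: "w \<noteq> 0" by (simp add: w_def)
    have "degree Q = degree w + degree Q1" unfolding q1(1) using w0 Q10 by (rule degree_mult_eq)
    moreover have "degree w = 1" by (simp add: w_def)
    ultimately have dQ1: "degree Q1 = n - 1" unfolding n_def by simp
    have "lead_coeff Q = lead_coeff w * lead_coeff Q1" unfolding q1(1) by (rule lead_coeff_mult)
    moreover have "lead_coeff w = 1" by (simp add: w_def)
    ultimately have lQ1: "lead_coeff Q1 = q" unfolding q_def by simp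
    define \<kappa> where "\<kappa> = c - a - b - 1"
    define F where "F = P - (pderiv Q + smult \<kappa> Q1)"
    have "\<forall>z. poly Q z = 0 \<longrightarrow> poly F z = 0"
    proof (intro allI impI)
      fix z assume z: "poly Q z = 0"
      show "poly F z = 0"
      proof (cases "z = 1")
        case True
        have "poly (pderiv Q) 1 = poly Q1 1" using q1(2) by (simp add: w_def)
        then show ?thesis using res[OF z] True unfolding F_def \<kappa>_def by (simp add: algebra_simps)
      next
        case False
        have "poly Q1 z = 0" using z False unfolding q1(1) w_def by simp
        then show ?thesis using res[OF z] False unfolding F_def by simp
      qed
    qed
    then have dv: "Q dvd F" using sqfree_dvd[OF sq Q0] by blast
    have "degree (pderiv Q) \<le> n - 1" by (simp add: degree_pderiv n_def)
    moreover have "degree (smult \<kappa> Q1) \<le> n - 1" using degree_smult_le[of \<kappa> Q1] dQ1 by simp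
    ultimately have "degree (pderiv Q + smult \<kappa> Q1) \<le> n - 1" by (rule degree_add_le)
    then have "degree F \<le> n - 1" unfolding F_def using dP by (intro degree_diff_le)
    then have "degree F < n" using n1 by simp
    then have "F = 0" using dv dvd_imp_degree_le[of Q F] by (auto simp: n_def)
    then have "P = pderiv Q + smult \<kappa> Q1" by (simp add: F_def)
    then have cP: "coeff P (n-1) = of_nat n * q + \<kappa> * q" using cpd lQ1 dQ1 by simp
    have "(of_nat n + \<kappa> + a) * q = 0 \<or> (of_nat n + \<kappa> + b) * q = 0" using top unfolding cP by (simp add: algebra_simps)
    then have "of_nat n + \<kappa> + a = 0 \<or> of_nat n + \<kappa> + b = 0" using q0' by simp
    then have "c - b = 1 - of_nat n \<or> c - a = 1 - of_nat n" unfolding \<kappa>_def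
      by (auto simp: algebra_simps add_eq_0_iff2)
    then have "c - b \<in> \<int> \<or> c - a \<in> \<int>" by auto
    then show False using st unfolding standing_def by auto
  qed
qed


lemma ric_aux: fixes Qf Pf Q'f P'f H H1 H2 Px S T :: "'a::comm_ring_1"
  assumes A1: "Qf*H1 = Pf*H" and A2: "Q'f*H1 + Qf*H2 = P'f*H + Pf*H1" and A3: "Px*H2 = S*H1 + T*H"
  shows "(Px*(Qf*P'f - Pf*Q'f + Pf*Pf) - S*Pf*Qf - T*Qf*Qf)*H = 0"
proof -
  have e: "Qf*H2 = P'f*H + Pf*H1 - Q'f*H1" using A2 by (simp add: algebra_simps)
  have "Px*Qf*Qf*H2 = Px*Qf*(Qf*H2)" by (simp add: algebra_simps)
  also have "\<dots> = Px*Qf*P'f*H + Px*(Pf - Q'f)*(Qf*H1)" unfolding e by (simp add: algebra_simps)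
  also have "\<dots> = Px*Qf*P'f*H + Px*(Pf - Q'f)*(Pf*H)" unfolding A1 ..
  finally have l: "Px*Qf*Qf*H2 = Px*Qf*P'f*H + Px*(Pf - Q'f)*(Pf*H)" .
  have "Px*Qf*Qf*H2 = Qf*Qf*(Px*H2)" by (simp add: algebra_simps)
  also have "\<dots> = S*Qf*(Qf*H1) + T*Qf*Qf*H" unfolding A3 by (simp add: algebra_simps)
  also have "\<dots> = S*Qf*(Pf*H) + T*Qf*Qf*H" unfolding A1 ..
  finally have r: "Px*Qf*Qf*H2 = S*Qf*(Pf*H) + T*Qf*Qf*H" .
  from l r have "Px*Qf*P'f*H + Px*(Pf - Q'f)*(Pf*H) - (S*Qf*(Pf*H) + T*Qf*Qf*H) = 0" by simp
  then show ?thesis by (simp add: algebra_simps)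
qed

lemma Hf_nz: "Hf a b c \<noteq> 0"
proof
  assume "Hf a b c = 0"
  then have "fps_nth (Hf a b c) 0 = 0" by simp
  then show False by (simp add: Hf_nth)
qed

lemma uniq_fps:
  assumes st: "standing a b c" and h: "fp u * fps_deriv (Hf a b c) + fp v * Hf a b c = 0"
  shows "u = 0 \<and> v = 0"
proof (cases "u = 0")
  case True
  then have "fp v * Hf a b c = 0" using h by simp
  then have "v = 0" using Hf_nz[of a b c] by simp
  then show ?thesis using True by simp
next
  case False
  have c: "c \<notin> \<int>" using st unfolding standing_def by auto
  define g where "g = gcd u v"
  have g0: "g \<noteq> 0" using False by (simp add: g_def)
  define Q where "Q = u div g"
  define P where "P = - (v div g)"
  have u: "u = g * Q" unfolding Q_def g_def by simp
  have v: "v = - (g * P)" unfolding P_def g_def by simp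
  have cop: "coprime P Q" unfolding P_def Q_def g_def using div_gcd_coprime[of u v] False
    by (simp add: coprime_commute)
  have Q0: "Q \<noteq> 0" using False u by auto
  define H where "H = Hf a b c"
  have "fp g * (fp Q * fps_deriv H - fp P * H) = 0"
    using h unfolding u v H_def by (simp add: fps_of_poly_mult fps_of_poly_uminus algebra_simps)
  then have A1: "fp Q * fps_deriv H = fp P * H" using g0 by simp
  have A2: "fp (pderiv Q) * fps_deriv H + fp Q * fps_deriv (fps_deriv H) = fp (pderiv P) * H + fp P * fps_deriv H"
    using arg_cong[OF A1, of fps_deriv] by (simp add: fps_of_poly_pderiv algebra_simps)
  have A3: "fp [:0,1,-1:] * fps_deriv (fps_deriv H) = fp [:-c, a+b+1:] * fps_deriv H + fp [:a*b:] * H"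
    unfolding H_def by (rule Hf_ode2[OF c])
  have "(fp [:0,1,-1:] * (fp Q * fp (pderiv P) - fp P * fp (pderiv Q) + fp P * fp P) - fp [:-c, a+b+1:] * fp P * fp Q
     - fp [:a*b:] * fp Q * fp Q) * H = 0"
    by (rule ric_aux[OF A1 A2 A3])
  moreover have "fp (ricE a b c P Q) = fp [:0,1,-1:] * (fp Q * fp (pderiv P) - fp P * fp (pderiv Q) + fp P * fp P) - fp [:-c, a+b+1:] * fp P * fp Q
     - fp [:a*b:] * fp Q * fp Q"
  proof -
    have "[:c, -(a+b+1):] = - [:-c, a+b+1:]" by simp
    then show ?thesis unfolding ricE_def by (simp only: fps_of_poly_mult fps_of_poly_add fps_of_poly_diff fps_of_poly_uminus) (simp add: algebra_simps)
  qed
  ultimately have "fp (ricE a b c P Q) * H = 0" by simp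
  then have E: "ricE a b c P Q = 0" using Hf_nz[of a b c] unfolding H_def by simp
  have "poly Q 0 \<noteq> 0"
  proof
    assume q: "poly Q 0 = 0"
    have "fps_nth (fp Q * fps_deriv H) 0 = fps_nth (fp P * H) 0" using A1 by simp
    then have "coeff P 0 = 0" using q by (simp add: poly_0_coeff_0 H_def Hf_nth)
    then have "poly P 0 = 0" by (simp add: poly_0_coeff_0)
    then have "[:0,1:] dvd P" "[:0,1:] dvd Q" using q poly_eq_0_iff_dvd[of P 0] poly_eq_0_iff_dvd[of Q 0] by auto
    then have "is_unit [:0,1::complex:]" using cop coprime_common_divisor by blast
    then show False by (simp add: is_unit_poly_iff)
  qed
  then show ?thesis using ric_poly_false[OF st cop Q0 _ E] by blast
qed


lemma lim_ratio1:
  fixes a c :: complex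
  assumes "\<And>n. a + of_nat n \<noteq> 0"
  shows "(\<lambda>n. (c + of_nat n) / (a + of_nat n)) \<longlonglongrightarrow> 1"
proof -
  have inf: "filterlim (\<lambda>n. a + of_nat n) at_infinity sequentially"
    by (rule tendsto_add_filterlim_at_infinity[OF tendsto_const tendsto_of_nat])
  have "(\<lambda>n. 1 + (c - a) / (a + of_nat n)) \<longlonglongrightarrow> 1 + 0"
    by (intro tendsto_add tendsto_const tendsto_divide_0[OF tendsto_const inf])
  moreover have "(c + of_nat n) / (a + of_nat n) = 1 + (c - a) / (a + of_nat n)" for n
    using assms[of n] by (simp add: field_simps)
  ultimately show ?thesis by simp
qed

lemma nint_add_nat_nz: "(a::complex) \<notin> \<int> \<Longrightarrow> a + of_nat n \<noteq> 0"
  by (metis Ints_minus Ints_of_nat add_eq_0_iff2)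

lemma Hf_radius:
  assumes a: "a \<notin> \<int>" and b: "b \<notin> \<int>" and c: "c \<notin> \<int>"
  shows "fps_conv_radius (Hf a b c) = 1"
  unfolding fps_conv_radius_def
proof (rule conv_radius_ratio_limit_nonzero[of _ 1])
  show "(1::ereal) = ereal 1" by simp
  show "(1::real) \<noteq> 0" by simp
  have tnz: "fps_nth (Hf a b c) n \<noteq> 0" for n
    using poch_nz[OF a, of n] poch_nz[OF b, of n] poch_nz[OF c, of n] by (simp add: Hf_nth)
  have l1: "(\<lambda>n. (c + of_nat n) / (a + of_nat n)) \<longlonglongrightarrow> 1" by (rule lim_ratio1) (rule nint_add_nat_nz[OF a])
  have l2: "(\<lambda>n. (1 + of_nat n) / (b + of_nat n)) \<longlonglongrightarrow> 1" by (rule lim_ratio1) (rule nint_add_nat_nz[OF b])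
  have "(\<lambda>n. norm ((c + of_nat n) / (a + of_nat n) * ((1 + of_nat n) / (b + of_nat n)))) \<longlonglongrightarrow> norm ((1::complex) * 1)"
    by (intro tendsto_norm tendsto_mult l1 l2)
  moreover have "norm (fps_nth (Hf a b c) n) / norm (fps_nth (Hf a b c) (Suc n)) =
      norm ((c + of_nat n) / (a + of_nat n) * ((1 + of_nat n) / (b + of_nat n)))" for n
  proof -
    have an: "a + of_nat n \<noteq> 0" "b + of_nat n \<noteq> 0" using nint_add_nat_nz a b by auto
    have cn: "c + of_nat n \<noteq> 0" "of_nat n + (1::complex) \<noteq> 0" using nint_add_nat_nz[OF c, of n] apply simp
      by (metis of_nat_Suc of_nat_eq_0_iff add.commute nat.distinct(1))
    have "fps_nth (Hf a b c) n / fps_nth (Hf a b c) (Suc n) = (c + of_nat n) / (a + of_nat n) * ((1 + of_nat n) / (b + of_nat n))"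
    proof -
      have g: "\<And>t A D::complex. t \<noteq> 0 \<Longrightarrow> A \<noteq> 0 \<Longrightarrow> D \<noteq> 0 \<Longrightarrow> t / (t * A / D) = D / A"
        by (simp add: field_simps)
      have "fps_nth (Hf a b c) n / fps_nth (Hf a b c) (Suc n) = ((c + of_nat n) * (of_nat n + 1)) / ((a + of_nat n) * (b + of_nat n))"
        unfolding Hf_Suc'[OF c] by (rule g) (use tnz[of n] an cn in auto)
      also have "\<dots> = (c + of_nat n) / (a + of_nat n) * ((1 + of_nat n) / (b + of_nat n))"
        by (simp add: add.commute)
      finally show ?thesis .
    qed
    then show ?thesis by (simp add: norm_divide[symmetric])
  qed
  ultimately show "(\<lambda>n. norm (fps_nth (Hf a b c) n) / norm (fps_nth (Hf a b c) (Suc n))) \<longlonglongrightarrow> 1" by simp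
qed

lemma cont_zero:
  fixes f :: "complex \<Rightarrow> complex"
  assumes "continuous_on S f" "open S" "finite Z" "\<forall>y\<in>S - Z. f y = 0" "x \<in> S"
  shows "f x = 0"
proof -
  have op: "open (S - (Z - {x}))" using assms(2,3) by (intro open_Diff finite_imp_closed) auto
  have "eventually (\<lambda>y. y \<in> S - (Z - {x}) - {x}) (at x)"
    by (rule eventually_at_in_open[OF op]) (use assms(5) in auto)
  then have ev: "eventually (\<lambda>y. f y = 0) (at x)"
    by eventually_elim (use assms(4) in auto)
  have "isCont f x" using assms(1,2,5) continuous_on_eq_continuous_at by blast
  then have l1: "(f \<longlongrightarrow> f x) (at x)" by (simp add: isCont_def)
  have l2: "(f \<longlongrightarrow> 0) (at x)" using ev by (rule tendsto_eventually)
  show ?thesis using tendsto_unique[OF _ l1 l2] by simp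
qed

lemma rad_ge: "norm x < 1 \<Longrightarrow> 1 \<le> (r::ereal) \<Longrightarrow> ereal (norm x) < r"
  by (metis ereal_less(3) less_le_trans one_ereal_def)

lemma ev_mult:
  assumes "norm x < 1" "1 \<le> fps_conv_radius H"
  shows "eval_fps (fp p * H) x = poly p x * eval_fps H x"
  using assms by (subst eval_fps_mult) (simp_all add: rad_ge)

lemma rad_mult: "1 \<le> fps_conv_radius H \<Longrightarrow> 1 \<le> fps_conv_radius (fp p * H)"
  using fps_conv_radius_mult[of "fp p" H] by simp

lemma ev_add:
  assumes "norm x < 1" "1 \<le> fps_conv_radius F" "1 \<le> fps_conv_radius G"
  shows "eval_fps (F + G) x = eval_fps F x + eval_fps G x"
  using assms by (subst eval_fps_add) (simp_all add: rad_ge)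

lemma rad_add: "1 \<le> fps_conv_radius F \<Longrightarrow> 1 \<le> fps_conv_radius G \<Longrightarrow> 1 \<le> fps_conv_radius (F + G)"
  using fps_conv_radius_add[of F G] by (metis min.bounded_iff order_trans)

lemma rad_diff: "1 \<le> fps_conv_radius F \<Longrightarrow> 1 \<le> fps_conv_radius G \<Longrightarrow> 1 \<le> fps_conv_radius (F - G)"
  using fps_conv_radius_diff[of F G] by (metis min.bounded_iff order_trans)

lemma rf_parts: "Fract (rf_num r) (rf_den r) = r" "rf_den r \<noteq> 0"
  by (simp_all add: rf_num_def rf_den_def)

lemma decomp_of_fps:
  fixes a b c :: complex and k l m :: int and Hk H1 H0 :: "complex fps"
  defines "Hk \<equiv> Hf (a + of_int k) (b + of_int l) (c + of_int m)" and "H1 \<equiv> Hf (a+1) (b+1) (c+1)" and "H0 \<equiv> Hf a b c"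
  assumes rk: "1 \<le> fps_conv_radius Hk" and r1: "1 \<le> fps_conv_radius H1" and r0: "1 \<le> fps_conv_radius H0"
    and d: "d \<noteq> 0" and E: "fp d * Hk = fp q * H1 + fp r * H0"
  shows "is_contig_decomp k l m a b c (Fract q d, Fract r d)"
  unfolding is_contig_decomp_def fst_conv snd_conv
proof (intro allI impI)
  fix x :: complex
  define nQ where "nQ = rf_num (Fract q d)"
  define dQ where "dQ = rf_den (Fract q d)"
  define nR where "nR = rf_num (Fract r d)"
  define dR where "dR = rf_den (Fract r d)"
  have dQ0: "dQ \<noteq> 0" and dR0: "dR \<noteq> 0" using rf_parts by (auto simp: dQ_def dR_def)
  have "Fract nQ dQ = Fract q d" using rf_parts(1) by (simp add: nQ_def dQ_def)
  then have eQ: "nQ * d = q * dQ" using eq_fract(1)[OF dQ0 d] by simp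
  have "Fract nR dR = Fract r d" using rf_parts(1) by (simp add: nR_def dR_def)
  then have eR: "nR * d = r * dR" using eq_fract(1)[OF dR0 d] by simp
  have "fp d * (fp (dQ*dR) * Hk) = fp d * (fp (nQ*dR) * H1 + fp (nR*dQ) * H0)"
  proof -
    have "fp d * (fp (dQ*dR) * Hk) = fp dQ * fp dR * (fp d * Hk)" by (simp add: fps_of_poly_mult algebra_simps)
    also have "\<dots> = fp (q*dQ) * fp dR * H1 + fp (r*dR) * fp dQ * H0" unfolding E by (simp add: fps_of_poly_mult algebra_simps)
    also have "\<dots> = fp (nQ*d) * fp dR * H1 + fp (nR*d) * fp dQ * H0" unfolding eQ eR ..
    also have "\<dots> = fp d * (fp (nQ*dR) * H1 + fp (nR*dQ) * H0)" by (simp add: fps_of_poly_mult algebra_simps)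
    finally show ?thesis .
  qed
  then have E2: "fp (dQ*dR) * Hk = fp (nQ*dR) * H1 + fp (nR*dQ) * H0" using d by simp
  assume x: "norm x < 1" and px1: "poly (rf_den (Fract q d)) x \<noteq> 0" and px2: "poly (rf_den (Fract r d)) x \<noteq> 0"
  have "eval_fps (fp (dQ*dR) * Hk) x = eval_fps (fp (nQ*dR) * H1 + fp (nR*dQ) * H0) x" using E2 by simp
  then have "poly dQ x * poly dR x * eval_fps Hk x = poly nQ x * poly dR x * eval_fps H1 x + poly nR x * poly dQ x * eval_fps H0 x"
    using x rk r1 r0 by (simp add: ev_mult ev_add rad_mult)
  moreover have "poly dQ x \<noteq> 0" "poly dR x \<noteq> 0" using px1 px2 by (simp_all add: dQ_def dR_def)
  ultimately have "eval_fps Hk x = poly nQ x / poly dQ x * eval_fps H1 x + poly nR x / poly dR x * eval_fps H0 x"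
    by (simp add: field_simps)
  then show "hyp2f1 (a + of_int k) (b + of_int l) (c + of_int m) x =
          rf_eval (Fract q d) x * hyp2f1 (a + 1) (b + 1) (c + 1) x + rf_eval (Fract r d) x * hyp2f1 a b c x"
    unfolding hyp2f1_eval rf_eval_def Hk_def H1_def H0_def nQ_def dQ_def nR_def dR_def .
qed

lemma fps_of_decomp:
  fixes a b c :: complex and k l m :: int and Hk H1 H0 :: "complex fps"
  defines "Hk \<equiv> Hf (a + of_int k) (b + of_int l) (c + of_int m)" and "H1 \<equiv> Hf (a+1) (b+1) (c+1)" and "H0 \<equiv> Hf a b c"
  assumes rk: "1 \<le> fps_conv_radius Hk" and r1: "1 \<le> fps_conv_radius H1" and r0: "1 \<le> fps_conv_radius H0"
    and D: "is_contig_decomp k l m a b c QR"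
  shows "fp (rf_den (fst QR) * rf_den (snd QR)) * Hk =
         fp (rf_num (fst QR) * rf_den (snd QR)) * H1 + fp (rf_num (snd QR) * rf_den (fst QR)) * H0"
proof -
  define nQ where "nQ = rf_num (fst QR)"
  define dQ where "dQ = rf_den (fst QR)"
  define nR where "nR = rf_num (snd QR)"
  define dR where "dR = rf_den (snd QR)"
  have dQ0: "dQ \<noteq> 0" and dR0: "dR \<noteq> 0" using rf_parts by (auto simp: dQ_def dR_def)
  define G where "G = fp (dQ*dR) * Hk - (fp (nQ*dR) * H1 + fp (nR*dQ) * H0)"
  have rG: "1 \<le> fps_conv_radius G" unfolding G_def using rk r1 r0 by (intro rad_diff rad_add rad_mult)
  define Z where "Z = {x. poly (dQ*dR) x = 0}"
  have fZ: "finite Z" unfolding Z_def using dQ0 dR0 by (intro poly_roots_finite) simp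
  have cont: "continuous_on (ball 0 1) (eval_fps G)"
  proof -
    have "ball (0::complex) 1 \<subseteq> eball 0 (fps_conv_radius G)"
    proof (rule subsetI)
      fix x :: complex assume "x \<in> ball 0 1"
      then have "norm x < 1" by simp
      then have "ereal (norm x) < fps_conv_radius G" using rG by (rule rad_ge)
      then show "x \<in> eball 0 (fps_conv_radius G)" by (simp add: dist_0_norm)
    qed
    then show ?thesis using continuous_on_eval_fps[of G] continuous_on_subset by blast
  qed
  have z: "\<forall>y\<in>ball 0 1 - Z. eval_fps G y = 0"
  proof
    fix y assume y: "y \<in> ball 0 1 - Z"
    then have ny: "norm y < 1" and pq: "poly dQ y \<noteq> 0" and pr: "poly dR y \<noteq> 0" by (auto simp: Z_def)
    have "hyp2f1 (a + of_int k) (b + of_int l) (c + of_int m) y =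
          rf_eval (fst QR) y * hyp2f1 (a + 1) (b + 1) (c + 1) y + rf_eval (snd QR) y * hyp2f1 a b c y"
      using D ny pq pr unfolding is_contig_decomp_def dQ_def dR_def by blast
    then have "eval_fps Hk y = poly nQ y / poly dQ y * eval_fps H1 y + poly nR y / poly dR y * eval_fps H0 y"
      unfolding hyp2f1_eval rf_eval_def Hk_def H1_def H0_def nQ_def dQ_def nR_def dR_def .
    then have "poly dQ y * poly dR y * eval_fps Hk y = poly nQ y * poly dR y * eval_fps H1 y + poly nR y * poly dQ y * eval_fps H0 y"
      using pq pr by (simp add: field_simps)
    then show "eval_fps G y = 0"
      unfolding G_def using ny rk r1 r0
      by (simp add: ev_mult ev_add rad_mult rad_add eval_fps_diff rad_ge)
  qed
  have all: "eval_fps G y = 0" if "norm y < 1" for y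
    by (rule cont_zero[OF cont open_ball fZ z]) (use that in auto)
  have ev: "eventually (\<lambda>y. eval_fps G y = eval_fps 0 y) (nhds 0)"
  proof -
    have "eventually (\<lambda>y. y \<in> ball 0 1) (nhds (0::complex))" by (rule eventually_nhds_in_open) auto
    then show ?thesis by eventually_elim (auto simp: all)
  qed
  have r0: "(0::ereal) < fps_conv_radius G" using less_le_trans[OF _ rG] by simp
  have "G = 0" by (rule eval_fps_eqD[OF r0 _ ev]) simp
  then show ?thesis unfolding G_def nQ_def dQ_def nR_def dR_def by simp
qed


lemma rad_gen: "\<alpha> \<notin> \<int> \<Longrightarrow> \<beta> \<notin> \<int> \<Longrightarrow> \<gamma> \<notin> \<int> \<Longrightarrow> 1 \<le> fps_conv_radius (Hf \<alpha> \<beta> \<gamma>)"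
  using Hf_radius by simp

lemma rad_std:
  assumes "standing a b c"
  shows "1 \<le> fps_conv_radius (Hf (a + of_int k) (b + of_int l) (c + of_int m))"
  using good_shift[OF assms, of k l m] unfolding good_def by (intro rad_gen) auto

lemma rad_std1: "standing a b c \<Longrightarrow> 1 \<le> fps_conv_radius (Hf (a + 1) (b + 1) (c + 1))"
  using rad_std[of a b c 1 1 1] by simp

lemma rad_std0: "standing a b c \<Longrightarrow> 1 \<le> fps_conv_radius (Hf a b c)"
  using rad_std[of a b c 0 0 0] by simp

lemma standing_shift1: assumes "standing a b c" shows "standing (a+1) (b+1) (c+1)"
proof -
  have e: "c + 1 - (a + 1) = c - a" "c + 1 - (b + 1) = c - b" "c + 1 - (a + 1) - (b + 1) = (c - a - b) - 1"
    "a + 1 - (b + 1) = a - b" by simp_all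
  have h: "c - a - b - 1 \<notin> \<int>" using nint_minus1[of "c - a - b"] assms unfolding standing_def by auto
  have eq: "c - a - (b + 1) = c - a - b - 1" by simp
  have h2: "c - a - (b + 1) \<notin> \<int>" unfolding eq by (rule h)
  show ?thesis using assms nint_plus1 h h2 unfolding standing_def e by auto
qed

lemma H1_deriv:
  assumes "standing a b c"
  shows "Hf (a+1) (b+1) (c+1) = fp [:c/(a*b):] * fps_deriv (Hf a b c)"
proof -
  have c: "c \<notin> \<int>" and ab: "a \<noteq> 0" "b \<noteq> 0" "c \<noteq> 0" using assms unfolding standing_def by auto
  have "fp [:c/(a*b):] * fps_deriv (Hf a b c) = fps_const (c/(a*b)) * fps_const (a*b/c) * Hf (a+1) (b+1) (c+1)"
    unfolding Hf_deriv[OF c] L3 by (simp add: mult.assoc)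
  also have "fps_const (c/(a*b)) * fps_const (a*b/c) = 1" using ab by simp
  finally show ?thesis by simp
qed

lemma exists_decomp:
  assumes st: "standing a b c"
  shows "\<exists>QR. is_contig_decomp k l m a b c QR"
proof -
  obtain d q r where d: "d \<noteq> 0" and E: "fp d * Hf (a + of_int k) (b + of_int l) (c + of_int m) = fp q * fps_deriv (Hf a b c) + fp r * Hf a b c"
    using existence_fps[OF st, of k l m] unfolding inspan_def by blast
  have c: "c \<notin> \<int>" using st unfolding standing_def by auto
  have "fp q * fps_deriv (Hf a b c) = fp (q * [:a*b/c:]) * Hf (a+1) (b+1) (c+1)"
    unfolding Hf_deriv[OF c] by (simp add: fps_of_poly_mult L3 mult.assoc)
  then have E': "fp d * Hf (a + of_int k) (b + of_int l) (c + of_int m) = fp (q * [:a*b/c:]) * Hf (a+1) (b+1) (c+1) + fp r * Hf a b c"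
    using E by simp
  show ?thesis using decomp_of_fps[OF rad_std[OF st] rad_std1[OF st] rad_std0[OF st] d E'] by blast
qed

lemma uniq_decomp:
  assumes st: "standing a b c" and D1: "is_contig_decomp k l m a b c QR1" and D2: "is_contig_decomp k l m a b c QR2"
  shows "QR1 = QR2"
proof -
  define Hk where "Hk = Hf (a + of_int k) (b + of_int l) (c + of_int m)"
  define H1 where "H1 = Hf (a+1) (b+1) (c+1)"
  define H0 where "H0 = Hf a b c"
  define nQ1 where "nQ1 = rf_num (fst QR1)"
  define dQ1 where "dQ1 = rf_den (fst QR1)"
  define nR1 where "nR1 = rf_num (snd QR1)"
  define dR1 where "dR1 = rf_den (snd QR1)"
  define nQ2 where "nQ2 = rf_num (fst QR2)"
  define dQ2 where "dQ2 = rf_den (fst QR2)"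
  define nR2 where "nR2 = rf_num (snd QR2)"
  define dR2 where "dR2 = rf_den (snd QR2)"
  have F1: "fp (dQ1*dR1) * Hk = fp (nQ1*dR1) * H1 + fp (nR1*dQ1) * H0"
    using fps_of_decomp[OF rad_std[OF st] rad_std1[OF st] rad_std0[OF st] D1]
    unfolding Hk_def H1_def H0_def nQ1_def dQ1_def nR1_def dR1_def .
  have F2: "fp (dQ2*dR2) * Hk = fp (nQ2*dR2) * H1 + fp (nR2*dQ2) * H0"
    using fps_of_decomp[OF rad_std[OF st] rad_std1[OF st] rad_std0[OF st] D2]
    unfolding Hk_def H1_def H0_def nQ2_def dQ2_def nR2_def dR2_def .
  define D1 where "D1 = dQ1*dR1"
  define D2 where "D2 = dQ2*dR2"
  define A1 where "A1 = nQ1*dR1"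
  define A2 where "A2 = nQ2*dR2"
  define B1 where "B1 = nR1*dQ1"
  define B2 where "B2 = nR2*dQ2"
  have "fp D2 * (fp D1 * Hk) - fp D1 * (fp D2 * Hk) = 0" by (simp add: algebra_simps)
  then have "fp D2 * (fp A1 * H1 + fp B1 * H0) - fp D1 * (fp A2 * H1 + fp B2 * H0) = 0"
    using F1 F2 unfolding D1_def D2_def A1_def A2_def B1_def B2_def by simp
  then have "fp (D2*A1 - D1*A2) * H1 + fp (D2*B1 - D1*B2) * H0 = 0"
    by (simp add: fps_of_poly_mult fps_of_poly_diff algebra_simps)
  then have "fp (smult (c/(a*b)) (D2*A1 - D1*A2)) * fps_deriv (Hf a b c) + fp (D2*B1 - D1*B2) * Hf a b c = 0"
    unfolding H1_def H1_deriv[OF st] H0_def by (simp add: fps_of_poly_mult fps_of_poly_smult L3[symmetric] mult_ac)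
  from uniq_fps[OF st this] have u: "smult (c/(a*b)) (D2*A1 - D1*A2) = 0" and v: "D2*B1 - D1*B2 = 0" by auto
  have abc: "c/(a*b) \<noteq> 0" using st unfolding standing_def by auto
  have u': "D2*A1 = D1*A2" using u abc by simp
  have v': "D2*B1 = D1*B2" using v by simp
  have nz: "dQ1 \<noteq> 0" "dR1 \<noteq> 0" "dQ2 \<noteq> 0" "dR2 \<noteq> 0" using rf_parts(2)
    by (auto simp: dQ1_def dR1_def dQ2_def dR2_def)
  have "(dR1*dR2) * (nQ1*dQ2) = (dR1*dR2) * (nQ2*dQ1)"
    using u' unfolding D1_def D2_def A1_def A2_def by (simp add: ac_simps)
  then have "nQ1*dQ2 = nQ2*dQ1" using nz by simp
  then have "Fract nQ1 dQ1 = Fract nQ2 dQ2" using eq_fract(1)[OF nz(1) nz(3)] by simp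
  then have fQ: "fst QR1 = fst QR2" using rf_parts(1) unfolding nQ1_def dQ1_def nQ2_def dQ2_def by metis
  have "(dQ1*dQ2) * (nR1*dR2) = (dQ1*dQ2) * (nR2*dR1)"
    using v' unfolding D1_def D2_def B1_def B2_def by (simp add: ac_simps)
  then have "nR1*dR2 = nR2*dR1" using nz by simp
  then have "Fract nR1 dR1 = Fract nR2 dR2" using eq_fract(1)[OF nz(2) nz(4)] by simp
  then have fR: "snd QR1 = snd QR2" using rf_parts(1) unfolding nR1_def dR1_def nR2_def dR2_def by metis
  show ?thesis using fQ fR by (simp add: prod_eq_iff)
qed

lemma the_decomp:
  assumes st: "standing a b c" and D: "is_contig_decomp k l m a b c QR"
  shows "contigQ k l m a b c = fst QR" "contigR k l m a b c = snd QR"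
proof -
  have "(THE QR. is_contig_decomp k l m a b c QR) = QR"
  proof (rule the_equality)
    show "is_contig_decomp k l m a b c QR" by (rule D)
    fix QR' assume "is_contig_decomp k l m a b c QR'"
    then show "QR' = QR" using uniq_decomp[OF st _ D] by blast
  qed
  then show "contigQ k l m a b c = fst QR" "contigR k l m a b c = snd QR"
    unfolding contigQ_def contigR_def by simp_all
qed


lemma rel2:
  assumes st: "standing a b c"
  shows "fp ([:0,1,-1:] * [:(a+1)*(b+1):]) * Hf (a+1+1) (b+1+1) (c+1+1)
         = fp (smult (c+1) [:-c, a+b+1:]) * Hf (a+1) (b+1) (c+1) + fp [:c*(c+1):] * Hf a b c"
proof -
  have c: "c \<notin> \<int>" and c1: "c + 1 \<notin> \<int>" using st nint_plus1 unfolding standing_def by auto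
  have c10: "c + 1 \<noteq> 0" using c1 by (metis Ints_0)
  have nz: "a \<noteq> 0" "b \<noteq> 0" "c \<noteq> 0" "c + 1 \<noteq> 0" using st c10 unfolding standing_def by auto
  define K where "K = (a+1)*(b+1)"
  define H0 where "H0 = Hf a b c"
  define H1 where "H1 = Hf (a+1) (b+1) (c+1)"
  define H2 where "H2 = Hf (a+1+1) (b+1+1) (c+1+1)"
  define px where "px = fp [:0,1,-1:]"
  define S where "S = fp [:-c, a+b+1:]"
  have d0: "fps_deriv H0 = fps_const (a*b/c) * H1" unfolding H0_def H1_def by (rule Hf_deriv[OF c])
  have d1: "fps_deriv H1 = fps_const (K/(c+1)) * H2" unfolding H1_def H2_def K_def by (rule Hf_deriv[OF c1])
  have ode: "px * fps_deriv (fps_deriv H0) = S * fps_deriv H0 + fps_const (a*b) * H0"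
    using Hf_ode2[OF c, of a b] unfolding px_def S_def H0_def L3 .
  have "px * (fps_const (a*b/c) * (fps_const (K/(c+1)) * H2)) = S * (fps_const (a*b/c) * H1) + fps_const (a*b) * H0"
    using ode unfolding d0 fps_deriv_mult_const_left d1 .
  then have "fps_const (c*(c+1)/(a*b)) * (px * (fps_const (a*b/c) * (fps_const (K/(c+1)) * H2)))
     = fps_const (c*(c+1)/(a*b)) * (S * (fps_const (a*b/c) * H1) + fps_const (a*b) * H0)" by simp
  then have "px * fps_const (c*(c+1)/(a*b) * (a*b/c) * (K/(c+1))) * H2
     = S * fps_const (c*(c+1)/(a*b) * (a*b/c)) * H1 + fps_const (c*(c+1)/(a*b) * (a*b)) * H0"
    by (simp only: fps_const_mult[symmetric] algebra_simps)
  moreover have "c*(c+1)/(a*b) * (a*b/c) * (K/(c+1)) = K" "c*(c+1)/(a*b) * (a*b/c) = c + 1" "c*(c+1)/(a*b) * (a*b) = c*(c+1)"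
    using nz by (simp_all add: field_simps)
  ultimately have "px * fps_const K * H2 = S * fps_const (c+1) * H1 + fps_const (c*(c+1)) * H0" by simp
  then show ?thesis unfolding fps_of_poly_mult fps_of_poly_smult L3 px_def S_def K_def H0_def H1_def H2_def
    by (simp add: mult_ac)
qed

theorem proposition1p3:
  fixes a b c :: complex and k l m :: int
  assumes "standing a b c"
  shows "contigR k l m a b c =
           Fract [:c * (c + 1) / ((a + 1) * (b + 1)):] [:0, 1, -1:]
           * contigQ (k - 1) (l - 1) (m - 1) (a + 1) (b + 1) (c + 1)"
proof -
  note st = assms
  have st1: "standing (a+1) (b+1) (c+1)" by (rule standing_shift1[OF st])
  obtain QR' where D': "is_contig_decomp (k-1) (l-1) (m-1) (a+1) (b+1) (c+1) QR'"
    using exists_decomp[OF st1] by blast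
  have cQ: "contigQ (k-1) (l-1) (m-1) (a+1) (b+1) (c+1) = fst QR'" by (rule the_decomp(1)[OF st1 D'])
  define nQ where "nQ = rf_num (fst QR')"
  define dQ where "dQ = rf_den (fst QR')"
  define nR where "nR = rf_num (snd QR')"
  define dR where "dR = rf_den (snd QR')"
  have nz: "dQ \<noteq> 0" "dR \<noteq> 0" using rf_parts(2) by (auto simp: dQ_def dR_def)
  have fQ: "fst QR' = Fract nQ dQ" using rf_parts(1) by (simp add: nQ_def dQ_def)
  have sh: "a + 1 + of_int (k - 1) = a + of_int k" "b + 1 + of_int (l - 1) = b + of_int l" "c + 1 + of_int (m - 1) = c + of_int m"
    by simp_all
  define Hk where "Hk = Hf (a + of_int k) (b + of_int l) (c + of_int m)"
  define H0 where "H0 = Hf a b c"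
  define H1 where "H1 = Hf (a+1) (b+1) (c+1)"
  define H2 where "H2 = Hf (a+1+1) (b+1+1) (c+1+1)"
  have F: "fp (dQ*dR) * Hk = fp (nQ*dR) * H2 + fp (nR*dQ) * H1"
    using fps_of_decomp[OF rad_std[OF st1] rad_std1[OF st1] rad_std0[OF st1] D']
    unfolding sh Hk_def H1_def H2_def nQ_def dQ_def nR_def dR_def .
  define K where "K = (a+1)*(b+1)"
  have K0: "K \<noteq> 0" using st unfolding standing_def K_def by (auto simp: add_eq_0_iff2)
  define px where "px = [:0,1,-1::complex:]"
  have px0: "px \<noteq> 0" by (simp add: px_def)
  have R2: "fp (px * [:K:]) * H2 = fp (smult (c+1) [:-c, a+b+1:]) * H1 + fp [:c*(c+1):] * H0"
    using rel2[OF st] unfolding px_def K_def H0_def H1_def H2_def .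
  define d' where "d' = px * [:K:] * (dQ*dR)"
  define q' where "q' = (nQ*dR) * smult (c+1) [:-c, a+b+1:] + px * [:K:] * (nR*dQ)"
  define r' where "r' = (nQ*dR) * [:c*(c+1):]"
  have d'0: "d' \<noteq> 0" unfolding d'_def using px0 K0 nz by simp
  have E: "fp d' * Hk = fp q' * H1 + fp r' * H0"
  proof -
    have "fp d' * Hk = fp (px * [:K:]) * (fp (dQ*dR) * Hk)" unfolding d'_def by (simp add: fps_of_poly_mult mult_ac)
    also have "\<dots> = fp (nQ*dR) * (fp (px * [:K:]) * H2) + fp (px * [:K:]) * fp (nR*dQ) * H1"
      unfolding F by (simp add: algebra_simps)
    also have "\<dots> = fp q' * H1 + fp r' * H0"
      unfolding R2 unfolding q'_def r'_def fps_of_poly_mult fps_of_poly_add by (simp add: algebra_simps)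
    finally show ?thesis .
  qed
  have D: "is_contig_decomp k l m a b c (Fract q' d', Fract r' d')"
    using decomp_of_fps[OF rad_std[OF st] rad_std1[OF st] rad_std0[OF st] d'0] E
    unfolding Hk_def H1_def H0_def by blast
  have cR: "contigR k l m a b c = Fract r' d'" using the_decomp(2)[OF st D] by simp
  have kk: "[:c * (c + 1) / K:] * [:K:] = [:c*(c+1):]" using K0 by simp
  have den: "px * dQ \<noteq> 0" using px0 nz by simp
  have "Fract r' d' = Fract ([:c * (c + 1) / K:] * nQ) (px * dQ)"
  proof (subst eq_fract(1)[OF d'0 den])
    have "r' * (px * dQ) = [:c*(c+1):] * (nQ * px * dQ * dR)" unfolding r'_def by (simp only: mult_ac)
    also have "\<dots> = ([:c * (c + 1) / K:] * [:K:]) * (nQ * px * dQ * dR)" unfolding kk ..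
    also have "\<dots> = [:c * (c + 1) / K:] * nQ * d'" unfolding d'_def by (simp only: mult_ac)
    finally show "r' * (px * dQ) = [:c * (c + 1) / K:] * nQ * d'" .
  qed
  also have "\<dots> = Fract [:c * (c + 1) / K:] px * Fract nQ dQ" by simp
  finally show ?thesis unfolding cR cQ fQ px_def K_def .
qed


end
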